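(* Let $Q=\{[\bar x]\in\mathbb P^3(\mathbb K):\bar x\cdot\bar x=0\}$. Let $a,b,c\in\mathbb P^3(\mathbb K)\setminus Q$, suppose $a\notin\{b\}\cup b^\perp$, and suppose $\gamma_c\gamma_a$ commutes with $\gamma_b\gamma_c$. Then $c\in\ell\cup\ell^\perp$, where $\ell$ is the line spanned by $a$ and $b$.
   Context: $\mathbb K$ is an algebraically closed field of characteristic 0 (an ultrapower of $\mathbb C$), and $\cdot$ is the standard bilinear form $\bar x\cdot\bar y=\sum_{i<4}x_iy_i$ on $\mathbb K^4$. For a projective subspace $P\subseteq\mathbb P^3$ with lift $\tilde P\le\mathbb K^4$, $P^\perp$ is the projective subspace whose lift is $\tilde P^\perp=\{w:w\cdot v=0\ \forall v\in\tilde P\}$. For $x\in\mathbb P^3\setminus Q$, $\gamma_x:Q\to Q$ is the involution defined by collinearity with $x$: for $y\in Q$ the line through $x,y$ meets $Q$ in the divisor $y+\gamma_x(y)$; equivalently $\gamma_x$ is the restriction to $Q$ of the projectivisation of the linear map which is $-1$ on $\tilde x$ and the identity on $\tilde x^\perp$. Composition is written by juxtaposition. *)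

theory Defs
  imports "HOL-Analysis.Finite_Cartesian_Product" "HOL-Computational_Algebra.Polynomial"
begin

text \<open>Points of P^3(K) are represented by nonzero vectors in K^4 (homogeneous coordinates);
  all notions below are invariant under nonzero rescaling.\<close>

definition bdot :: "'k::comm_ring_1 ^ 4 \<Rightarrow> 'k ^ 4 \<Rightarrow> 'k" where
  "bdot x y = (\<Sum>i\<in>UNIV. x $ i * y $ i)"

definition proj_eq :: "'k::field ^ 4 \<Rightarrow> 'k ^ 4 \<Rightarrow> bool" where
  "proj_eq x y \<longleftrightarrow> (\<exists>t. t \<noteq> 0 \<and> y = (\<chi> i. t * x $ i))"

definition quadric :: "('k::field ^ 4) set" where
  "quadric = {q. q \<noteq> 0 \<and> bdot q q = 0}"

text \<open>Linear map which is -1 on the line of x and the identity on its orthogonal complement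
  (for bdot x x nonzero); gamma_x is its projectivisation restricted to Q.\<close>
definition gamma :: "'k::field ^ 4 \<Rightarrow> 'k ^ 4 \<Rightarrow> 'k ^ 4" where
  "gamma x y = (\<chi> i. y $ i - 2 * bdot x y / bdot x x * x $ i)"

definition on_line :: "'k::field ^ 4 \<Rightarrow> 'k ^ 4 \<Rightarrow> 'k ^ 4 \<Rightarrow> bool" where
  "on_line a b c \<longleftrightarrow> (\<exists>s t. c = (\<chi> i. s * a $ i + t * b $ i))"

definition on_perp_line :: "'k::field ^ 4 \<Rightarrow> 'k ^ 4 \<Rightarrow> 'k ^ 4 \<Rightarrow> bool" where
  "on_perp_line a b c \<longleftrightarrow> bdot a c = 0 \<and> bdot b c = 0"

end

theory Submission imports Defs "HOL-Analysis.Cartesian_Space" begin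

type_synonym 'k v4 = "'k ^ 4"

lemma bdot_comm: "bdot x y = bdot y x"
  unfolding bdot_def by (simp add: mult.commute)
lemma bdot_add_left: "bdot (x + y) z = bdot x z + bdot y z"
  unfolding bdot_def by (simp add: distrib_right sum.distrib)
lemma bdot_add_right: "bdot z (x + y) = bdot z x + bdot z y"
  unfolding bdot_def by (simp add: distrib_left sum.distrib)
lemma bdot_diff_left: "bdot (x - y) (z::'k::comm_ring_1^4) = bdot x z - bdot y z"
  unfolding bdot_def by (simp add: left_diff_distrib sum_subtractf)
lemma bdot_diff_right: "bdot (z::'k::comm_ring_1^4) (x - y) = bdot z x - bdot z y"
  unfolding bdot_def by (simp add: right_diff_distrib sum_subtractf)
lemma bdot_smult_left: "bdot (s *s x) y = s * bdot x y"
  unfolding bdot_def by (simp add: sum_distrib_left mult.assoc)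
lemma bdot_smult_right: "bdot x (s *s y) = s * bdot x y"
  unfolding bdot_def by (simp add: sum_distrib_left mult.left_commute)
lemma bdot_zero_left[simp]: "bdot 0 y = 0" unfolding bdot_def by simp
lemma bdot_zero_right[simp]: "bdot y 0 = 0" unfolding bdot_def by simp

lemma bdot_neg_left: "bdot (- x) (z::'k::comm_ring_1^4) = - bdot x z"
  unfolding bdot_def by (simp add: sum_negf)
lemma bdot_neg_right: "bdot z (- x::'k::comm_ring_1^4) = - bdot z x"
  unfolding bdot_def by (simp add: sum_negf)

lemmas bdot_simps = bdot_neg_left bdot_neg_right bdot_add_left bdot_add_right bdot_diff_left bdot_diff_right
  bdot_smult_left bdot_smult_right

lemma gamma_eq: "gamma x y = y - (2 * bdot x y / bdot x x) *s x"
  unfolding gamma_def by (simp add: vec_eq_iff)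

lemma gamma_add: "gamma x (y + z) = gamma x y + gamma x z"
  unfolding gamma_eq by (simp add: vec_eq_iff bdot_simps add_divide_distrib algebra_simps)
lemma gamma_diff: "gamma x (y - z) = gamma x y - gamma x z"
  unfolding gamma_eq by (simp add: vec_eq_iff bdot_simps diff_divide_distrib algebra_simps)
lemma gamma_smult: "gamma x (s *s y) = s *s gamma x y"
  unfolding gamma_eq by (simp add: vec_eq_iff bdot_simps algebra_simps)
lemma gamma_neg: "gamma x (- y) = - gamma x y"
  unfolding gamma_eq by (simp add: vec_eq_iff bdot_simps algebra_simps)
lemma gamma_perp: "bdot x y = 0 \<Longrightarrow> gamma x y = y"
  unfolding gamma_eq by (simp add: vec_eq_iff)
lemma gamma_invol: "bdot x x \<noteq> 0 \<Longrightarrow> gamma x (gamma x (y::'k::field_char_0^4)) = y"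
  unfolding gamma_eq by (simp add: vec_eq_iff bdot_simps field_simps)
lemma gamma_isom: "bdot x x \<noteq> 0 \<Longrightarrow> bdot (gamma x y) (gamma x (z::'k::field_char_0^4)) = bdot y z"
  unfolding gamma_eq apply (simp add: bdot_simps field_simps) by (metis bdot_comm)

definition ee :: "4 \<Rightarrow> 'k::comm_ring_1^4" where "ee j = (\<chi> i. if i = j then 1 else 0)"

lemma ee_comp[simp]: "ee j $ i = (if i = j then 1 else 0)" by (simp add: ee_def)

lemma bdot_ee: "bdot (ee j) (ee k) = (if j = k then 1 else (0::'a::comm_ring_1))"
proof -
  have "(\<lambda>i. ee j $ i * ee k $ i) = (\<lambda>i. if i = j then (if j = k then 1 else 0) else (0::'a))"
    by (auto simp: fun_eq_iff)
  hence "bdot (ee j) (ee k) = (\<Sum>i\<in>UNIV. if i = j then (if j = k then 1 else 0) else (0::'a))"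
    unfolding bdot_def by metis
  also have "\<dots> = (if j = k then 1 else 0)" by (subst sum.delta) auto
  finally show ?thesis .
qed

lemma third_idx: "\<exists>k::4. k \<noteq> j \<and> k \<noteq> l"
proof -
  have "card {j,l} < card (UNIV::4 set)" by (simp add: card_insert_if)
  hence "{j,l} \<noteq> UNIV" by auto
  thus ?thesis by auto
qed

lemma vec_decomp: "v = (\<Sum>j\<in>UNIV. (v$j) *s (ee j :: 'k::comm_ring_1^4))"
  by (simp add: vec_eq_iff sum_component if_distrib cong: if_cong)

lemma lin_sum:
  assumes add: "\<And>x y. h (x + y) = h x + h y" and sm: "\<And>s x. h (s *s x) = s *s h x"
  shows "h (sum f S) = (\<Sum>j\<in>S. h (f j :: 'k::field^4))"
proof (induction S rule: infinite_finite_induct)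
  case (infinite A)
  have "h 0 = (0::'k) *s h 0" using sm[of 0 0] by simp
  then show ?case using infinite by (simp add: vec_eq_iff)
next
  case empty
  have "h 0 = (0::'k) *s h 0" using sm[of 0 0] by simp
  then show ?case by (simp add: vec_eq_iff)
next
  case (insert x F)
  then show ?case by (simp add: add)
qed

lemma scalar_map:
  fixes h :: "'k::{alg_closed_field,field_char_0}^4 \<Rightarrow> 'k^4"
  assumes add: "\<And>x y. h (x + y) = h x + h y" and sm: "\<And>s x. h (s *s x) = s *s h x"
    and Q: "\<And>q. q \<in> quadric \<Longrightarrow> \<exists>t. h q = t *s q"
  shows "\<exists>\<mu>. \<forall>v. h v = \<mu> *s v"
proof -
  obtain ii :: 'k where ii: "ii ^ 2 = -1" using nth_root_exists[of 2 "-1::'k"] by auto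
  have ii0: "ii \<noteq> 0" using ii by auto
  have inQ: "ee j + c *s ee k \<in> quadric" if "j \<noteq> k" "c^2 = -1" for j k and c :: 'k
  proof -
    have "(ee j + c *s ee k) $ j = 1" using that by simp
    hence "ee j + c *s ee k \<noteq> 0" by (metis one_neq_zero zero_index)
    moreover have "bdot (ee j + c *s ee k) (ee j + c *s ee k) = 0"
    proof -
      have "bdot (ee j + c *s ee k) (ee j + c *s ee k) = bdot (ee j) (ee j) + c * bdot (ee j) (ee k)
         + c * bdot (ee k) (ee j) + c * c * bdot (ee k) (ee k)"
        by (simp only: bdot_simps algebra_simps)
      also have "\<dots> = 1 + c^2" using that(1) by (simp add: bdot_ee power2_eq_square)
      finally show ?thesis using that(2) by simp
    qed
    ultimately show ?thesis unfolding quadric_def by blast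
  qed
  have ii2: "(-ii)^2 = -1" using ii by simp
  have pm: "\<exists>s t. 2 *s h (ee j) = s *s (ee j + ii *s ee k) + t *s (ee j + (-ii) *s ee k)"
    if jk: "j \<noteq> k" for j k
  proof -
    obtain s where s: "h (ee j + ii *s ee k) = s *s (ee j + ii *s ee k)" using Q[OF inQ[OF jk ii]] by auto
    obtain t where t: "h (ee j + (-ii) *s ee k) = t *s (ee j + (-ii) *s ee k)" using Q[OF inQ[OF jk ii2]] by auto
    have "(ee j + ii *s ee k) + (ee j + (-ii) *s ee k) = (2::'k) *s ee j"
      by (simp add: vec_eq_iff)
    hence "2 *s h (ee j) = h (ee j + ii *s ee k) + h (ee j + (-ii) *s ee k)"
      using add sm by metis
    thus ?thesis using s t by metis
  qed
  have C1: "h (ee j) $ l = 0" if "l \<noteq> j" for j l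
  proof -
    obtain k where k: "k \<noteq> j" "k \<noteq> l" using third_idx by blast
    obtain s t where "2 *s h (ee j) = s *s (ee j + ii *s ee k) + t *s (ee j + (-ii) *s ee k)"
      using pm[OF k(1)[symmetric]] by blast
    hence "(2 *s h (ee j)) $ l = (s *s (ee j + ii *s ee k) + t *s (ee j + (-ii) *s ee k)) $ l" by simp
    thus ?thesis using k that by simp
  qed
  define lam where "lam j = h (ee j) $ j" for j
  have C1': "h (ee j) = lam j *s ee j" for j
    using C1 by (auto simp: vec_eq_iff lam_def)
  have C2: "lam j = lam k" for j k
  proof (cases "j = k")
    case False
    obtain s where s: "h (ee j + ii *s ee k) = s *s (ee j + ii *s ee k)" using Q[OF inQ[OF False ii]] by auto
    hence "lam j *s ee j + ii *s (lam k *s ee k) = s *s (ee j + ii *s ee k)"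
      using add sm C1' by metis
    hence "(lam j *s ee j + ii *s (lam k *s ee k)) $ j = (s *s (ee j + ii *s ee k)) $ j"
      and "(lam j *s ee j + ii *s (lam k *s ee k)) $ k = (s *s (ee j + ii *s ee k)) $ k" by simp_all
    thus ?thesis using False ii0 by simp
  qed simp
  have "h v = lam 1 *s v" for v
  proof -
    have "h v = (\<Sum>j\<in>UNIV. h ((v$j) *s ee j))"
      by (subst vec_decomp[of v]) (rule lin_sum[OF add sm])
    also have "\<dots> = (\<Sum>j\<in>UNIV. lam 1 *s ((v$j) *s ee j))"
      by (intro sum.cong refl) (metis sm C1' vector_smult_assoc C2 mult.commute)
    also have "\<dots> = lam 1 *s v"
      by (subst (2) vec_decomp[of v]) (simp add: vec_eq_iff sum_component sum_distrib_left mult.assoc)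
    finally show ?thesis .
  qed
  thus ?thesis by blast
qed

lemma bdot_ee_right: "bdot a (ee j) = a $ j"
proof -
  have "(\<lambda>i. a $ i * ee j $ i) = (\<lambda>i. if i = j then a $ j else 0)"
    by (auto simp: fun_eq_iff)
  hence "bdot a (ee j) = (\<Sum>i\<in>UNIV. if i = j then a $ j else 0)"
    unfolding bdot_def by metis
  also have "\<dots> = a $ j" by (subst sum.delta) auto
  finally show ?thesis .
qed

lemma indep_minor:
  fixes a b :: "'k::field^4"
  assumes "a \<noteq> 0" "b \<noteq> 0" "\<not> proj_eq b a"
  shows "\<exists>j k. a$j * b$k - a$k * b$j \<noteq> 0"
proof (rule ccontr)
  assume H: "\<not> ?thesis"
  obtain j where j: "a $ j \<noteq> 0" using assms(1) by (metis vec_eq_iff zero_index)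
  define t where "t = b $ j / a $ j"
  have bt: "b = t *s a"
  unfolding vec_eq_iff
  proof
    fix k
    have "a$j * b$k = a$k * b$j" using H by auto
    thus "b $ k = (t *s a) $ k" using j by (simp add: t_def field_simps)
  qed
  have t0: "t \<noteq> 0" using bt assms(2) by auto
  have "a = (1/t) *s b" using bt t0 by (simp add: vector_smult_assoc)
  hence "proj_eq b a" unfolding proj_eq_def using t0 by (intro exI[of _ "1/t"]) (simp add: vector_scalar_mult_def)
  thus False using assms(3) by blast
qed

lemma solve2:
  fixes a b :: "'k::field^4"
  assumes d: "a$j * b$k - a$k * b$j \<noteq> 0"
  shows "\<exists>w. bdot a w = \<alpha> \<and> bdot b w = \<beta> \<and> (\<forall>l. l \<noteq> j \<longrightarrow> l \<noteq> k \<longrightarrow> w $ l = 0)"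
proof -
  define D where "D = a$j * b$k - a$k * b$j"
  have jk: "j \<noteq> k" using d by auto
  define w where "w = ((\<alpha> * b$k - \<beta> * a$k)/D) *s ee j + ((\<beta> * a$j - \<alpha> * b$j)/D) *s ee k"
  have D0: "D \<noteq> 0" using d D_def by simp
  have "bdot a w = (a$j*(\<alpha>*b$k - \<beta>*a$k) + a$k*(\<beta>*a$j - \<alpha>*b$j))/D" unfolding w_def
    by (simp add: bdot_simps bdot_ee_right add_divide_distrib ac_simps)
  also have "\<dots> = \<alpha>*D/D" by (simp add: D_def algebra_simps)
  finally have 1: "bdot a w = \<alpha>" using D0 by simp
  have "bdot b w = (b$j*(\<alpha>*b$k - \<beta>*a$k) + b$k*(\<beta>*a$j - \<alpha>*b$j))/D" unfolding w_def
    by (simp add: bdot_simps bdot_ee_right add_divide_distrib ac_simps)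
  also have "\<dots> = \<beta>*D/D" by (simp add: D_def algebra_simps)
  finally have 2: "bdot b w = \<beta>" using D0 by simp
  note 1 2
  moreover have "\<forall>l. l \<noteq> j \<longrightarrow> l \<noteq> k \<longrightarrow> w $ l = 0" unfolding w_def by simp
  ultimately show ?thesis by blast
qed

lemma solve_any:
  fixes a b :: "'k::field^4"
  assumes "a \<noteq> 0" "b \<noteq> 0" "\<not> proj_eq b a"
  shows "\<exists>w. bdot a w = \<alpha> \<and> bdot b w = \<beta>"
  using indep_minor[OF assms] solve2 by blast

lemma perp_exists:
  fixes a b :: "'k::field^4"
  assumes "a \<noteq> 0" "b \<noteq> 0" "\<not> proj_eq b a"
  shows "\<exists>v. v \<noteq> 0 \<and> bdot a v = 0 \<and> bdot b v = 0"
proof -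
  obtain j k where d: "a$j * b$k - a$k * b$j \<noteq> 0" using indep_minor[OF assms] by blast
  obtain l where l: "l \<noteq> j" "l \<noteq> k" using third_idx by blast
  obtain w where w: "bdot a w = a $ l" "bdot b w = b $ l" "\<forall>l. l \<noteq> j \<longrightarrow> l \<noteq> k \<longrightarrow> w $ l = 0"
    using solve2[OF d] by blast
  have "(ee l - w) $ l = 1" using w(3) l by simp
  hence "ee l - w \<noteq> 0" by (metis one_neq_zero zero_index)
  moreover have "bdot a (ee l - w) = 0" "bdot b (ee l - w) = 0"
    using w by (simp_all add: bdot_simps bdot_ee_right)
  ultimately show ?thesis by blast
qed

lemma no_minus_one:
  fixes a b u :: "'k::field_char_0^4"
  assumes aa: "bdot a a \<noteq> 0" and bb: "bdot b b \<noteq> 0" and ab: "bdot a b \<noteq> 0"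
    and E: "gamma b (gamma a u) = - u"
  shows "u = 0"
proof -
  have "gamma a u = gamma b (gamma b (gamma a u))" using gamma_invol[OF bb] by simp
  also have "\<dots> = - gamma b u" using E gamma_neg by metis
  finally have E2: "gamma a u = - gamma b u" .
  define al where "al = 2 * bdot a u / bdot a a"
  define be where "be = 2 * bdot b u / bdot b b"
  have E3: "2 *s u = al *s a + be *s b" using E2 unfolding gamma_eq al_def be_def
    by (simp add: vec_eq_iff algebra_simps)
  have "bdot a (2 *s u) = bdot a (al *s a + be *s b)" using E3 by simp
  hence "be * bdot a b = 0" using aa by (simp add: bdot_simps al_def field_simps)
  hence be0: "be = 0" using ab by simp
  have "bdot b (2 *s u) = bdot b (al *s a + be *s b)" using E3 by simp
  hence "al * bdot b a = 0" using bb by (simp add: bdot_simps be_def field_simps)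
  hence al0: "al = 0" using ab bdot_comm[of a b] by simp
  have "2 *s u = 0" using E3 al0 be0 by (simp add: vec_eq_iff)
  thus ?thesis by (simp add: vec_eq_iff)
qed

lemma span2: "\<exists>s t. gamma a (gamma b w) - w = s *s a + t *s b"
  unfolding gamma_eq
  apply (rule exI[of _ "- (2 * bdot a (w - (2 * bdot b w / bdot b b) *s b) / bdot a a)"])
  apply (rule exI[of _ "- (2 * bdot b w / bdot b b)"])
  by (simp add: vec_eq_iff algebra_simps)

lemma finish_line:
  fixes c x a b :: "'k::field_char_0^4"
  assumes cc: "bdot c c \<noteq> 0" and cx: "bdot c x \<noteq> 0"
    and G: "gamma c x = s *s a + t *s b" and X: "x = p *s a + q *s b"
  shows "on_line a b c"
proof -
  define K where "K = bdot c c / (2 * bdot c x)"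
  have "x - gamma c x = (2 * bdot c x / bdot c c) *s c" unfolding gamma_eq by (simp add: vec_eq_iff)
  hence "c = K *s (x - gamma c x)" using cc cx unfolding K_def
    by (simp add: vec_eq_iff field_simps)
  also have "x - gamma c x = (p - s) *s a + (q - t) *s b" unfolding G by (simp add: X vec_eq_iff algebra_simps)
  also have "K *s ((p - s) *s a + (q - t) *s b) = (\<chi> i. (K * (p - s)) * a $ i + (K * (q - t)) * b $ i)"
    by (simp add: vec_eq_iff algebra_simps)
  finally show ?thesis unfolding on_line_def by blast
qed

theorem lemma4p9:
  fixes a b c :: "'k::{alg_closed_field, field_char_0} ^ 4"
  assumes "a \<noteq> 0" "b \<noteq> 0" "c \<noteq> 0"
    and "bdot a a \<noteq> 0" "bdot b b \<noteq> 0" "bdot c c \<noteq> 0"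
    and "\<not> proj_eq b a" "bdot b a \<noteq> 0"
    and "\<forall>q\<in>quadric. proj_eq (gamma c (gamma a (gamma b (gamma c q))))
                                (gamma b (gamma c (gamma c (gamma a q))))"
  shows "on_line a b c \<or> on_perp_line a b c"
proof -
  note a0 = assms(1) and b0 = assms(2) and c0 = assms(3) and aa = assms(4) and bb = assms(5)
    and cc = assms(6) and npe = assms(7) and ba = assms(8) and hyp = assms(9)
  have ab: "bdot a b \<noteq> 0" using ba bdot_comm[of a b] by simp
  define A where "A v = gamma c (gamma a (gamma b (gamma c v)))" for v
  define B where "B v = gamma b (gamma a v)" for v
  define h where "h v = gamma a (gamma b (A v))" for v
  have hadd: "h (x + y) = h x + h y" for x y unfolding h_def A_def by (simp add: gamma_add)
  have hsm: "h (s *s x) = s *s h x" for s x unfolding h_def A_def by (simp add: gamma_smult)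
  have hQ: "\<exists>t. h q = t *s q" if q: "q \<in> quadric" for q
  proof -
    have "proj_eq (A q) (B q)" using hyp q gamma_invol[OF cc] unfolding A_def B_def by auto
    then obtain t where t: "t \<noteq> 0" "B q = t *s A q" unfolding proj_eq_def vector_scalar_mult_def by auto
    hence "A q = (1/t) *s B q" by (simp add: vector_smult_assoc)
    hence "h q = (1/t) *s gamma a (gamma b (B q))" unfolding h_def by (simp add: gamma_smult)
    also have "gamma a (gamma b (B q)) = q" unfolding B_def using gamma_invol[OF aa] gamma_invol[OF bb] by simp
    finally show ?thesis by blast
  qed
  obtain \<mu> where mu: "\<And>v. h v = \<mu> *s v" using scalar_map[of h, OF hadd hsm hQ] by blast
  have AB: "A v = \<mu> *s B v" for v
  proof -
    have "A v = gamma b (gamma a (h v))" unfolding h_def using gamma_invol[OF aa] gamma_invol[OF bb] by simp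
    thus ?thesis unfolding mu B_def by (simp add: gamma_smult)
  qed
  have "bdot (A a) (A a) = bdot a a" unfolding A_def
    using gamma_isom[OF aa] gamma_isom[OF bb] gamma_isom[OF cc] by simp
  moreover have "bdot (B a) (B a) = bdot a a" unfolding B_def
    using gamma_isom[OF aa] gamma_isom[OF bb] by simp
  ultimately have "\<mu> * \<mu> * bdot a a = bdot a a" using AB[of a] by (simp add: bdot_simps)
  hence "\<mu> * \<mu> = 1" using aa by simp
  hence mu2: "\<mu> = 1 \<or> \<mu> = -1"
    by (metis add.inverse_inverse mult_cancel_left1 square_eq_1_iff)
  have mu1: "\<mu> = 1"
  proof (rule ccontr)
    assume "\<mu> \<noteq> 1"
    hence m: "\<mu> = -1" using mu2 by blast
    obtain v where v: "v \<noteq> 0" "bdot a v = 0" "bdot b v = 0" using perp_exists[OF a0 b0 npe] by blast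
    have "A (gamma c v) = gamma c v" unfolding A_def using gamma_invol[OF cc] gamma_perp[OF v(2)] gamma_perp[OF v(3)] by simp
    hence "gamma c v = - B (gamma c v)" using AB[of "gamma c v"] m by (simp add: vec_eq_iff)
    hence "B (gamma c v) = - gamma c v" by (metis minus_minus)
    hence "gamma c v = 0" using no_minus_one[OF aa bb ab] unfolding B_def by blast
    hence "v = 0" using gamma_invol[OF cc, of v] by (metis gamma_smult vector_smult_lzero)
    thus False using v by blast
  qed
  have AB1: "A v = B v" for v using AB[of v] mu1 by simp
  have span: "\<exists>s t. gamma c (B v - v) = s *s a + t *s b" for v
  proof -
    have "gamma a (gamma b (gamma c v)) = gamma c (B v)"
      using AB1[of v] gamma_invol[OF cc] unfolding A_def by metis
    hence "gamma a (gamma b (gamma c v)) - gamma c v = gamma c (B v - v)" by (simp add: gamma_diff)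
    thus ?thesis using span2[of a b "gamma c v"] by metis
  qed
  have lem: "\<exists>s t. gamma c x = s *s a + t *s b"
    if vx: "B v - v = k *s x" and k0: "k \<noteq> 0" for v x k
  proof -
    obtain s t where "gamma c (k *s x) = s *s a + t *s b" using span[of v] vx by metis
    hence "k *s gamma c x = s *s a + t *s b" by (simp add: gamma_smult)
    hence "gamma c x = (s / k) *s a + (t / k) *s b" using k0 by (simp add: vec_eq_iff field_simps)
    thus ?thesis by blast
  qed
  obtain v1 where v1: "bdot a v1 = 0" "bdot b v1 = 1" using solve_any[OF a0 b0 npe] by blast
  have "B v1 - v1 = (- 2 / bdot b b) *s b" unfolding B_def using gamma_perp[OF v1(1)]
    by (simp add: gamma_eq v1 vec_eq_iff)
  then obtain sb tb where Gb: "gamma c b = sb *s a + tb *s b" using lem[of v1 "- 2 / bdot b b" b] bb by auto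
  obtain v2 where v2: "bdot a v2 = 1" "bdot b v2 = 2 * bdot a b / bdot a a" using solve_any[OF a0 b0 npe] by blast
  have g2: "gamma a v2 = v2 - (2 / bdot a a) *s a" by (simp add: gamma_eq v2)
  have "bdot b (gamma a v2) = 0" unfolding g2 using v2 by (simp add: bdot_simps bdot_comm[of b a])
  hence "B v2 = gamma a v2" unfolding B_def by (rule gamma_perp)
  hence "B v2 - v2 = (- 2 / bdot a a) *s a" using g2
    by (simp add: vec_eq_iff)
  then obtain sa ta where Ga: "gamma c a = sa *s a + ta *s b" using lem[of v2 "- 2 / bdot a a" a] aa by auto
  show ?thesis
  proof (cases "bdot c b = 0")
    case False
    have "b = 0 *s a + 1 *s b" by (simp add: vec_eq_iff)
    thus ?thesis using finish_line[OF cc False Gb] by blast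
  next
    case cb: True
    show ?thesis
    proof (cases "bdot c a = 0")
      case False
      have "a = 1 *s a + 0 *s b" by (simp add: vec_eq_iff)
      thus ?thesis using finish_line[OF cc False Ga] by blast
    next
      case True
      thus ?thesis using cb unfolding on_perp_line_def by (simp add: bdot_comm)
    qed
  qed
qed

end
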